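(* Assume the demand is i.i.d. with pmf $P_X$. Let $b\in\mathcal B$ be a constant-distribution policy that is invariant for the initial battery distribution $\theta_1$, with $S_1\sim\theta_1$ independent of $X_1\sim P_X$, $W_1=S_1-X_1$ and $Y_1\sim b(\cdot\mid W_1)$. Then $I(W_1;Y_1)=I(W_1;X_1)$.
   Context: $\mathcal X=\{0,\dots,m_x\}$, $\mathcal Y=\{0,\dots,m_y\}$, $\mathcal S=\{0,\dots,m_s\}$ with $m_x\le m_y$; $\mathcal W=\{s-x\}$; $\mathcal Y_\circ(w)=\{y\in\mathcal Y:w+y\in\mathcal S\}$; $\mathcal B$ the conditional pmfs $b(y\mid w)$ with $b(\mathcal Y_\circ(w)\mid w)=1$. Demand $X_t$ i.i.d. $\sim P_X$ independent of $S_1$. The constant-distribution policy $b$ draws $Y_t\sim b(\cdot\mid W_t)$, $W_t=S_t-X_t$, $S_{t+1}=S_t+Y_t-X_t$. With $\theta_t(s)=P(S_t=s\mid Y^{t-1}=y^{t-1})$ and $\xi_t(w)=P(W_t=w\mid Y^{t-1}=y^{t-1})$, $b$ is invariant for $\theta_1$ if $\theta_t=\theta_1$ and $\xi_t=\xi_1$ for all $t$, where $\xi_1(w)=\sum_{(x,s):s-x=w}P_X(x)\theta_1(s)$. *)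

theory Defs
  imports Complex_Main
begin

text \<open>Alphabets: X = {0..mx}, Y = {0..my}, S = {0..ms} (as nat sets); W = {s - x} (as int set).\<close>

definition Wset :: "nat \<Rightarrow> nat \<Rightarrow> int set" where
  "Wset mx ms = {int s - int x | s x. s \<le> ms \<and> x \<le> mx}"

definition Yo :: "nat \<Rightarrow> nat \<Rightarrow> int \<Rightarrow> nat set" where
  "Yo my ms w = {y. y \<le> my \<and> w + int y \<in> int ` {0..ms}}"

definition is_pmf_on :: "('a \<Rightarrow> real) \<Rightarrow> 'a set \<Rightarrow> bool" where
  "is_pmf_on p A \<longleftrightarrow> (\<forall>a\<in>A. 0 \<le> p a) \<and> sum p A = 1"

definition Bset :: "nat \<Rightarrow> nat \<Rightarrow> nat \<Rightarrow> (int \<Rightarrow> nat \<Rightarrow> real) set" where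
  "Bset mx my ms = {b. \<forall>w\<in>Wset mx ms. is_pmf_on (b w) {0..my} \<and> sum (b w) (Yo my ms w) = 1}"

text \<open>joint_SY mx ms PX th1 b n ys s = P(S_{n+1} = s, Y_1 = ys 1, ..., Y_n = ys n)
  for the process S_1 ~ th1, X_t iid ~ PX, W_t = S_t - X_t, Y_t ~ b(.|W_t),
  S_{t+1} = W_t + Y_t.\<close>
primrec joint_SY :: "nat \<Rightarrow> nat \<Rightarrow> (nat \<Rightarrow> real) \<Rightarrow> (nat \<Rightarrow> real) \<Rightarrow> (int \<Rightarrow> nat \<Rightarrow> real)
    \<Rightarrow> nat \<Rightarrow> (nat \<Rightarrow> nat) \<Rightarrow> nat \<Rightarrow> real" where
  "joint_SY mx ms PX th1 b 0 ys s' = th1 s'"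
| "joint_SY mx ms PX th1 b (Suc n) ys s' =
     (\<Sum>s\<in>{0..ms}. \<Sum>x\<in>{0..mx}.
        if int s - int x + int (ys (Suc n)) = int s'
        then joint_SY mx ms PX th1 b n ys s * PX x * b (int s - int x) (ys (Suc n))
        else 0)"

definition prob_Y :: "nat \<Rightarrow> nat \<Rightarrow> (nat \<Rightarrow> real) \<Rightarrow> (nat \<Rightarrow> real) \<Rightarrow> (int \<Rightarrow> nat \<Rightarrow> real)
    \<Rightarrow> nat \<Rightarrow> (nat \<Rightarrow> nat) \<Rightarrow> real" where
  "prob_Y mx ms PX th1 b n ys = (\<Sum>s\<in>{0..ms}. joint_SY mx ms PX th1 b n ys s)"

text \<open>theta_{n+1}(s) = P(S_{n+1} = s | Y^n = ys).\<close>
definition theta :: "nat \<Rightarrow> nat \<Rightarrow> (nat \<Rightarrow> real) \<Rightarrow> (nat \<Rightarrow> real) \<Rightarrow> (int \<Rightarrow> nat \<Rightarrow> real)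
    \<Rightarrow> nat \<Rightarrow> (nat \<Rightarrow> nat) \<Rightarrow> nat \<Rightarrow> real" where
  "theta mx ms PX th1 b n ys s = joint_SY mx ms PX th1 b n ys s / prob_Y mx ms PX th1 b n ys"

text \<open>xi_{n+1}(w) = P(W_{n+1} = w | Y^n = ys); X_{n+1} is independent of (S_{n+1}, Y^n).\<close>
definition xi :: "nat \<Rightarrow> nat \<Rightarrow> (nat \<Rightarrow> real) \<Rightarrow> (nat \<Rightarrow> real) \<Rightarrow> (int \<Rightarrow> nat \<Rightarrow> real)
    \<Rightarrow> nat \<Rightarrow> (nat \<Rightarrow> nat) \<Rightarrow> int \<Rightarrow> real" where
  "xi mx ms PX th1 b n ys w =
     (\<Sum>s\<in>{0..ms}. \<Sum>x\<in>{0..mx}. if int s - int x = w then joint_SY mx ms PX th1 b n ys s * PX x else 0)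
     / prob_Y mx ms PX th1 b n ys"

definition xi1 :: "nat \<Rightarrow> nat \<Rightarrow> (nat \<Rightarrow> real) \<Rightarrow> (nat \<Rightarrow> real) \<Rightarrow> int \<Rightarrow> real" where
  "xi1 mx ms PX th1 w = (\<Sum>s\<in>{0..ms}. \<Sum>x\<in>{0..mx}. if int s - int x = w then PX x * th1 s else 0)"

definition invariant :: "nat \<Rightarrow> nat \<Rightarrow> nat \<Rightarrow> (nat \<Rightarrow> real) \<Rightarrow> (nat \<Rightarrow> real) \<Rightarrow> (int \<Rightarrow> nat \<Rightarrow> real) \<Rightarrow> bool" where
  "invariant mx my ms PX th1 b \<longleftrightarrow>
     (\<forall>n ys. (\<forall>i\<in>{1..n}. ys i \<le> my) \<and> prob_Y mx ms PX th1 b n ys > 0 \<longrightarrow>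
        (\<forall>s\<in>{0..ms}. theta mx ms PX th1 b n ys s = theta mx ms PX th1 b 0 ys s) \<and>
        (\<forall>w\<in>Wset mx ms. xi mx ms PX th1 b n ys w = xi1 mx ms PX th1 w))"

definition mutual_info :: "('a \<Rightarrow> 'c \<Rightarrow> real) \<Rightarrow> 'a set \<Rightarrow> 'c set \<Rightarrow> real" where
  "mutual_info p A C =
     (\<Sum>a\<in>A. \<Sum>c\<in>C. if p a c = 0 then 0
        else p a c * log 2 (p a c / ((\<Sum>c'\<in>C. p a c') * (\<Sum>a'\<in>A. p a' c))))"

end

theory Submission
  imports Defs
begin

definition Tz :: "nat \<Rightarrow> (nat \<Rightarrow> real) \<Rightarrow> int \<Rightarrow> real" where
  "Tz ms th z = (if 0 \<le> z \<and> z \<le> int ms then th (nat z) else 0)"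

lemma mi_formula:
  fixes p :: "int \<Rightarrow> nat \<Rightarrow> real" and T :: "int \<Rightarrow> real" and R :: "nat \<Rightarrow> real"
  assumes fA: "finite A" and fC: "finite C"
    and peq: "\<And>a c. a\<in>A \<Longrightarrow> c\<in>C \<Longrightarrow> p a c = T (a + int c) * R c"
    and pnn: "\<And>a c. a\<in>A \<Longrightarrow> c\<in>C \<Longrightarrow> p a c \<ge> 0"
    and Tnn: "\<And>z. T z \<ge> 0"
    and pC: "\<And>c. c\<in>C \<Longrightarrow> (\<Sum>a\<in>A. p a c) = R c"
  shows "mutual_info p A C = (\<Sum>a\<in>A. \<Sum>c\<in>C. p a c * log 2 (T (a + int c)))
      - (\<Sum>a\<in>A. (\<Sum>c\<in>C. p a c) * log 2 (\<Sum>c\<in>C. p a c))"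
proof -
  have trm: "(if p a c = 0 then 0 else p a c * log 2 (p a c / ((\<Sum>c'\<in>C. p a c') * (\<Sum>a'\<in>A. p a' c))))
     = p a c * log 2 (T (a + int c)) - p a c * log 2 (\<Sum>c'\<in>C. p a c')" if a: "a\<in>A" and c: "c\<in>C" for a c
  proof cases
    assume "p a c = 0" thus ?thesis by simp
  next
    assume ne: "p a c \<noteq> 0"
    hence pos: "p a c > 0" using pnn[OF a c] by linarith
    have l1: "p a c \<le> (\<Sum>c'\<in>C. p a c')"
      by (rule member_le_sum[OF c]) (use pnn a fC in auto)
    have l2: "p a c \<le> (\<Sum>a'\<in>A. p a' c)"
      by (rule member_le_sum[OF a]) (use pnn c fA in auto)
    have Rp: "R c > 0" using l2 pos pC[OF c] by linarith
    have Tp: "T (a + int c) > 0" using pos peq[OF a c] Rp Tnn[of "a + int c"]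
      by (metis less_eq_real_def mult_zero_left)
    have pAp: "(\<Sum>c'\<in>C. p a c') > 0" using l1 pos by linarith
    have "p a c / ((\<Sum>c'\<in>C. p a c') * (\<Sum>a'\<in>A. p a' c)) = T (a + int c) / (\<Sum>c'\<in>C. p a c')"
      using Rp pAp by (simp add: pC[OF c] peq[OF a c])
    moreover have "log 2 (T (a + int c) / (\<Sum>c'\<in>C. p a c')) = log 2 (T (a + int c)) - log 2 (\<Sum>c'\<in>C. p a c')"
      using Tp pAp by (simp add: log_divide)
    ultimately show ?thesis using ne by (simp add: right_diff_distrib)
  qed
  have "mutual_info p A C = (\<Sum>a\<in>A. \<Sum>c\<in>C. p a c * log 2 (T (a + int c)) - p a c * log 2 (\<Sum>c'\<in>C. p a c'))"
    unfolding mutual_info_def by (intro sum.cong refl) (simp add: trm)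
  also have "\<dots> = (\<Sum>a\<in>A. (\<Sum>c\<in>C. p a c * log 2 (T (a + int c))) - (\<Sum>c\<in>C. p a c) * log 2 (\<Sum>c\<in>C. p a c))"
    by (simp add: sum_subtractf sum_distrib_right)
  finally show ?thesis by (simp add: sum_subtractf)
qed

lemma sum_TlogT:
  fixes c :: nat and A :: "int set" and th :: "nat \<Rightarrow> real"
  assumes fA: "finite A" and cond: "\<And>s. s \<le> ms \<Longrightarrow> th s \<noteq> 0 \<Longrightarrow> int s - int c \<in> A"
  shows "(\<Sum>a\<in>A. Tz ms th (a + int c) * log 2 (Tz ms th (a + int c))) = (\<Sum>s\<in>{0..ms}. th s * log 2 (th s))"
proof -
  define D where "D = {s\<in>{0..ms}. th s \<noteq> 0}"
  define f where "f = (\<lambda>s::nat. int s - int c)"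
  have "(\<Sum>s\<in>{0..ms}. th s * log 2 (th s)) = (\<Sum>s\<in>D. th s * log 2 (th s))"
    by (rule sum.mono_neutral_right) (auto simp: D_def)
  also have "\<dots> = (\<Sum>s\<in>D. Tz ms th (f s + int c) * log 2 (Tz ms th (f s + int c)))"
    by (intro sum.cong refl) (auto simp: D_def f_def Tz_def)
  also have "\<dots> = (\<Sum>a\<in>f ` D. Tz ms th (a + int c) * log 2 (Tz ms th (a + int c)))"
    by (subst sum.reindex) (auto simp: inj_on_def f_def)
  also have "\<dots> = (\<Sum>a\<in>A. Tz ms th (a + int c) * log 2 (Tz ms th (a + int c)))"
  proof (rule sum.mono_neutral_left[OF fA])
    show "f ` D \<subseteq> A" using cond by (auto simp: D_def f_def)
    show "\<forall>i\<in>A - f ` D. Tz ms th (i + int c) * log 2 (Tz ms th (i + int c)) = 0"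
    proof
      fix a assume a: "a \<in> A - f ` D"
      show "Tz ms th (a + int c) * log 2 (Tz ms th (a + int c)) = 0"
      proof (cases "0 \<le> a + int c \<and> a + int c \<le> int ms")
        case True
        have "nat (a + int c) \<notin> D"
        proof
          assume "nat (a + int c) \<in> D"
          hence "f (nat (a + int c)) \<in> f ` D" by blast
          moreover have "f (nat (a + int c)) = a" using True by (simp add: f_def)
          ultimately show False using a by simp
        qed
        hence "th (nat (a + int c)) = 0" using True by (auto simp: D_def)
        thus ?thesis using True by (simp add: Tz_def)
      qed (auto simp: Tz_def)
    qed
  qed
  finally show ?thesis ..
qed

lemma first_term:
  fixes p :: "int \<Rightarrow> nat \<Rightarrow> real" and R :: "nat \<Rightarrow> real"
  assumes fA: "finite A" and fC: "finite C"
    and peq: "\<And>a c. a\<in>A \<Longrightarrow> c\<in>C \<Longrightarrow> p a c = T (a + int c) * R c"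
    and K: "\<And>c. c\<in>C \<Longrightarrow> R c = 0 \<or> (\<Sum>a\<in>A. T (a + int c) * log 2 (T (a + int c))) = K"
    and R1: "(\<Sum>c\<in>C. R c) = 1"
  shows "(\<Sum>a\<in>A. \<Sum>c\<in>C. p a c * log 2 (T (a + int c))) = K"
proof -
  have "(\<Sum>a\<in>A. \<Sum>c\<in>C. p a c * log 2 (T (a + int c)))
      = (\<Sum>c\<in>C. \<Sum>a\<in>A. R c * (T (a + int c) * log 2 (T (a + int c))))"
    by (subst sum.swap) (intro sum.cong refl, simp add: peq)
  also have "\<dots> = (\<Sum>c\<in>C. R c * K)"
    by (intro sum.cong refl) (use K in \<open>auto simp: sum_distrib_left[symmetric]\<close>)
  also have "\<dots> = K" using R1 by (simp add: sum_distrib_right[symmetric])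
  finally show ?thesis .
qed

lemma Wset_alt: "Wset mx ms = (\<lambda>(s,x). int s - int x) ` ({0..ms} \<times> {0..mx})"
  unfolding Wset_def by fastforce

lemma Wset_finite: "finite (Wset mx ms)"
  unfolding Wset_alt by auto

lemma Wset_mem: "s \<le> ms \<Longrightarrow> x \<le> mx \<Longrightarrow> int s - int x \<in> Wset mx ms"
  unfolding Wset_def by auto

lemma delta_nat:
  fixes g :: "nat \<Rightarrow> real"
  shows "(\<Sum>s\<in>{0..ms}. if z = int s then g s else 0) = (if 0 \<le> z \<and> z \<le> int ms then g (nat z) else 0)"
proof (cases "0 \<le> z \<and> z \<le> int ms")
  case True
  have "(\<Sum>s\<in>{0..ms}. if z = int s then g s else 0) = (\<Sum>s\<in>{0..ms}. if s = nat z then g s else 0)"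
    by (intro sum.cong refl) (use True in auto)
  also have "\<dots> = g (nat z)" using True by (simp add: sum.delta' nat_le_iff)
  finally show ?thesis using True by simp
next
  case False
  hence "(\<Sum>s\<in>{0..ms}. if z = int s then g s else 0) = 0"
    by (intro sum.neutral) auto
  thus ?thesis using False by auto
qed

lemma xi1_sum:
  assumes PX: "is_pmf_on PX {0..mx}" and th: "is_pmf_on th1 {0..ms}"
  shows "(\<Sum>w\<in>Wset mx ms. xi1 mx ms PX th1 w) = 1"
proof -
  have "(\<Sum>w\<in>Wset mx ms. xi1 mx ms PX th1 w)
     = (\<Sum>s\<in>{0..ms}. \<Sum>x\<in>{0..mx}. \<Sum>w\<in>Wset mx ms. if int s - int x = w then PX x * th1 s else 0)"
    unfolding xi1_def by (subst sum.swap) (intro sum.cong refl, subst sum.swap, rule refl)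
  also have "\<dots> = (\<Sum>s\<in>{0..ms}. \<Sum>x\<in>{0..mx}. PX x * th1 s)"
    by (intro sum.cong refl) (simp add: sum.delta Wset_finite Wset_mem)
  also have "\<dots> = (\<Sum>s\<in>{0..ms}. th1 s) * (\<Sum>x\<in>{0..mx}. PX x)"
    by (simp add: sum_distrib_left sum_distrib_right mult.commute)
  also have "\<dots> = 1" using PX th by (simp add: is_pmf_on_def)
  finally show ?thesis .
qed

lemma xi1_nn:
  assumes PX: "is_pmf_on PX {0..mx}" and th: "is_pmf_on th1 {0..ms}"
  shows "xi1 mx ms PX th1 w \<ge> 0"
  unfolding xi1_def using PX th by (intro sum_nonneg) (auto simp: is_pmf_on_def)

theorem lemma7:
  fixes mx my ms :: nat and PX th1 :: "nat \<Rightarrow> real" and b :: "int \<Rightarrow> nat \<Rightarrow> real"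
  assumes "mx \<le> my"
    and "is_pmf_on PX {0..mx}"
    and "is_pmf_on th1 {0..ms}"
    and "b \<in> Bset mx my ms"
    and "invariant mx my ms PX th1 b"
  shows "mutual_info (\<lambda>w y. xi1 mx ms PX th1 w * b w y) (Wset mx ms) {0..my}
       = mutual_info (\<lambda>w x. \<Sum>s\<in>{0..ms}. if int s - int x = w then th1 s * PX x else 0)
           (Wset mx ms) {0..mx}"
proof -
  note PX = assms(2) and th = assms(3) and bB = assms(4) and inv = assms(5)
  define W where "W = Wset mx ms"
  define T where "T = Tz ms th1"
  define K where "K = (\<Sum>s\<in>{0..ms}. th1 s * log 2 (th1 s))"
  define xi where "xi = xi1 mx ms PX th1"
  define HW where "HW = (\<Sum>w\<in>W. xi w * log 2 (xi w))"
  have fW: "finite W" unfolding W_def by (rule Wset_finite)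
  have Tnn: "\<And>z. T z \<ge> 0" using th by (auto simp: T_def Tz_def is_pmf_on_def)
  have xinn: "\<And>w. xi w \<ge> 0" unfolding xi_def by (rule xi1_nn[OF PX th])
  have xisum: "(\<Sum>w\<in>W. xi w) = 1" unfolding xi_def W_def by (rule xi1_sum[OF PX th])
  have th1s: "(\<Sum>s\<in>{0..ms}. th1 s) = 1" and th1nn: "\<And>s. s \<le> ms \<Longrightarrow> th1 s \<ge> 0"
    using th by (auto simp: is_pmf_on_def)
  have PXs: "(\<Sum>x\<in>{0..mx}. PX x) = 1" and PXnn: "\<And>x. x \<le> mx \<Longrightarrow> PX x \<ge> 0"
    using PX by (auto simp: is_pmf_on_def)
  have bnn: "\<And>w y. w \<in> W \<Longrightarrow> y \<le> my \<Longrightarrow> b w y \<ge> 0"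
    and b1: "\<And>w. w \<in> W \<Longrightarrow> (\<Sum>y\<in>{0..my}. b w y) = 1"
    and bYo: "\<And>w. w \<in> W \<Longrightarrow> sum (b w) (Yo my ms w) = 1"
    using bB by (auto simp: Bset_def is_pmf_on_def W_def)
  have bzero: "b w y = 0" if w: "w \<in> W" and y: "y \<le> my" and out: "\<not> (0 \<le> w + int y \<and> w + int y \<le> int ms)" for w y
  proof -
    have sub: "Yo my ms w \<subseteq> {0..my}" by (auto simp: Yo_def)
    have "sum (b w) {0..my} = sum (b w) ({0..my} - Yo my ms w) + sum (b w) (Yo my ms w)"
      using sub by (simp add: sum.subset_diff)
    hence z: "sum (b w) ({0..my} - Yo my ms w) = 0" using b1[OF w] bYo[OF w] by simp
    have yin: "y \<in> {0..my} - Yo my ms w" using y out by (auto simp: Yo_def)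
    show ?thesis using z yin bnn[OF w] sum_nonneg_eq_0_iff[of "{0..my} - Yo my ms w" "b w"] by auto
  qed

  define pR where "pR = (\<lambda>w x. \<Sum>s\<in>{0..ms}. if int s - int x = w then th1 s * PX x else 0)"
  have peqR: "pR w x = T (w + int x) * PX x" if "w \<in> W" "x \<in> {0..mx}" for w x
  proof -
    have "pR w x = (\<Sum>s\<in>{0..ms}. if w + int x = int s then th1 s * PX x else 0)"
      unfolding pR_def by (intro sum.cong refl) auto
    also have "\<dots> = T (w + int x) * PX x" by (simp add: delta_nat T_def Tz_def)
    finally show ?thesis .
  qed
  have pnnR: "pR w x \<ge> 0" if "w \<in> W" "x \<in> {0..mx}" for w x
    unfolding pR_def using that th1nn PXnn by (intro sum_nonneg) auto
  have pCR: "(\<Sum>w\<in>W. pR w x) = PX x" if "x \<in> {0..mx}" for x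
  proof -
    have "(\<Sum>w\<in>W. pR w x) = (\<Sum>s\<in>{0..ms}. \<Sum>w\<in>W. if int s - int x = w then th1 s * PX x else 0)"
      unfolding pR_def by (rule sum.swap)
    also have "\<dots> = (\<Sum>s\<in>{0..ms}. th1 s * PX x)"
      using that by (intro sum.cong refl) (simp add: sum.delta Wset_finite W_def Wset_mem)
    also have "\<dots> = PX x" using th1s by (simp add: sum_distrib_right[symmetric])
    finally show ?thesis .
  qed
  have pAR: "(\<Sum>x\<in>{0..mx}. pR w x) = xi w" for w
    unfolding pR_def xi_def xi1_def by (subst sum.swap) (intro sum.cong refl, simp add: mult.commute)
  have KR: "(\<Sum>a\<in>W. \<Sum>c\<in>{0..mx}. pR a c * log 2 (T (a + int c))) = K"
  proof (rule first_term[OF fW _ peqR _ PXs])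
    fix c assume c: "c \<in> {0..mx}"
    have "(\<Sum>a\<in>W. T (a + int c) * log 2 (T (a + int c))) = K"
      unfolding T_def K_def by (rule sum_TlogT[OF fW]) (use c in \<open>auto simp: W_def Wset_mem\<close>)
    thus "PX c = 0 \<or> (\<Sum>a\<in>W. T (a + int c) * log 2 (T (a + int c))) = K" by simp
  qed auto
  have MIR: "mutual_info pR W {0..mx} = K - HW"
    by (subst mi_formula[OF fW _ peqR pnnR Tnn pCR]) (auto simp: KR HW_def pAR)

  define pL where "pL = (\<lambda>w y. xi1 mx ms PX th1 w * b w y)"
  define r where "r = (\<lambda>y. \<Sum>w\<in>W. pL w y)"
  have pnnL: "pL w y \<ge> 0" if "w \<in> W" "y \<in> {0..my}" for w y
    unfolding pL_def using that xinn bnn by (simp add: xi_def)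
  have rnn: "r y \<ge> 0" if "y \<in> {0..my}" for y
    unfolding r_def using pnnL that by (intro sum_nonneg) auto
  have pAL: "(\<Sum>y\<in>{0..my}. pL w y) = xi w" if "w \<in> W" for w
    unfolding pL_def using b1[OF that] by (simp add: sum_distrib_left[symmetric] xi_def)
  have R1: "(\<Sum>y\<in>{0..my}. r y) = 1"
    unfolding r_def by (subst sum.swap) (simp add: pAL xisum)
  define J where "J = (\<lambda>y s'. \<Sum>w\<in>W. if w + int y = int s' then xi w * b w y else 0)"
  have Jeq: "joint_SY mx ms PX th1 b (Suc 0) (\<lambda>_. y) s' = J y s'" for y s'
  proof -
    have pt: "(if w + int y = int s' then xi w * b w y else 0) =
       (\<Sum>s\<in>{0..ms}. \<Sum>x\<in>{0..mx}. if int s - int x = w then (if w + int y = int s' then PX x * th1 s * b w y else 0) else 0)" for w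
      unfolding xi_def xi1_def
      by (cases "w + int y = int s'") (auto simp: sum_distrib_right intro!: sum.cong sum.neutral)
    have "J y s' = (\<Sum>w\<in>W. \<Sum>s\<in>{0..ms}. \<Sum>x\<in>{0..mx}. if int s - int x = w then (if w + int y = int s' then PX x * th1 s * b w y else 0) else 0)"
      unfolding J_def by (simp only: pt)
    also have "\<dots> = (\<Sum>s\<in>{0..ms}. \<Sum>x\<in>{0..mx}. \<Sum>w\<in>W. if int s - int x = w then (if w + int y = int s' then PX x * th1 s * b w y else 0) else 0)"
      by (subst sum.swap) (intro sum.cong refl, subst sum.swap, rule refl)
    also have "\<dots> = (\<Sum>s\<in>{0..ms}. \<Sum>x\<in>{0..mx}. if int s - int x + int y = int s' then th1 s * PX x * b (int s - int x) y else 0)"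
      by (intro sum.cong refl) (simp add: sum.delta fW W_def Wset_mem Wset_finite mult.commute mult.left_commute)
    also have "\<dots> = joint_SY mx ms PX th1 b (Suc 0) (\<lambda>_. y) s'" by (simp only: joint_SY.simps)
    finally show ?thesis by simp
  qed

  have prob1: "prob_Y mx ms PX th1 b (Suc 0) (\<lambda>_. y) = r y" if y: "y \<le> my" for y
  proof -
    have "prob_Y mx ms PX th1 b (Suc 0) (\<lambda>_. y) = (\<Sum>s'\<in>{0..ms}. J y s')"
      unfolding prob_Y_def by (intro sum.cong refl) (rule Jeq)
    also have "\<dots> = (\<Sum>w\<in>W. \<Sum>s'\<in>{0..ms}. if w + int y = int s' then xi w * b w y else 0)"
      unfolding J_def by (rule sum.swap)
    also have "\<dots> = (\<Sum>w\<in>W. if 0 \<le> w + int y \<and> w + int y \<le> int ms then xi w * b w y else 0)"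
      by (intro sum.cong refl) (rule delta_nat)
    also have "\<dots> = (\<Sum>w\<in>W. xi w * b w y)"
      by (intro sum.cong refl) (use bzero y in auto)
    also have "\<dots> = r y" by (simp add: r_def pL_def xi_def)
    finally show ?thesis .
  qed
  have prob0: "prob_Y mx ms PX th1 b 0 ys = 1" for ys
    unfolding prob_Y_def using th1s by simp
  have inv1: "J y s' = th1 s' * r y" if y: "y \<le> my" and rp: "r y > 0" and s': "s' \<le> ms" for y s'
  proof -
    have "(\<forall>i\<in>{1..Suc 0}. (\<lambda>_. y) i \<le> my) \<and> prob_Y mx ms PX th1 b (Suc 0) (\<lambda>_. y) > 0"
      using prob1[OF y] rp y by simp
    from inv[unfolded invariant_def, rule_format, OF this]
    have "theta mx ms PX th1 b (Suc 0) (\<lambda>_. y) s' = theta mx ms PX th1 b 0 (\<lambda>_. y) s'"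
      using s' by auto
    hence "J y s' / r y = th1 s'"
      unfolding theta_def by (simp only: prob1[OF y] prob0 Jeq joint_SY.simps(1) div_by_1)
    thus ?thesis using rp by (simp add: field_simps)
  qed
  have Jw: "J y (nat (w + int y)) = xi w * b w y" if w: "w \<in> W" and rng: "0 \<le> w + int y" for w y
  proof -
    have "J y (nat (w + int y)) = (\<Sum>w'\<in>W. if w' = w then xi w' * b w' y else 0)"
      unfolding J_def by (intro sum.cong refl) (use rng in auto)
    also have "\<dots> = xi w * b w y" using w fW by (simp add: sum.delta')
    finally show ?thesis .
  qed
  have peqL: "pL w y = T (w + int y) * r y" if w: "w \<in> W" and y: "y \<in> {0..my}" for w y
  proof (cases "r y = 0")
    case True
    have "\<forall>w'\<in>W. pL w' y = 0"
      using True sum_nonneg_eq_0_iff[OF fW, of "\<lambda>w'. pL w' y"] pnnL y unfolding r_def by auto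
    thus ?thesis using w True by simp
  next
    case False
    hence rp: "r y > 0" using rnn[OF y] by simp
    show ?thesis
    proof (cases "0 \<le> w + int y \<and> w + int y \<le> int ms")
      case True
      have "pL w y = J y (nat (w + int y))" using Jw[OF w] True by (simp add: pL_def xi_def)
      also have "\<dots> = th1 (nat (w + int y)) * r y" using inv1[OF _ rp] y True by auto
      finally show ?thesis using True by (simp add: T_def Tz_def)
    next
      case False
      thus ?thesis using bzero[OF w _ False] y by (auto simp: pL_def T_def Tz_def)
    qed
  qed
  have KL: "r c = 0 \<or> (\<Sum>a\<in>W. T (a + int c) * log 2 (T (a + int c))) = K" if c: "c \<in> {0..my}" for c
  proof (cases "r c = 0")
    case False
    hence rp: "r c > 0" using rnn[OF c] by simp
    have "(\<Sum>a\<in>W. T (a + int c) * log 2 (T (a + int c))) = K"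
      unfolding T_def K_def
    proof (rule sum_TlogT[OF fW])
      fix s assume s: "s \<le> ms" and ne: "th1 s \<noteq> 0"
      show "int s - int c \<in> W"
      proof (rule ccontr)
        assume nW: "int s - int c \<notin> W"
        have "J c s = 0" unfolding J_def
        proof (rule sum.neutral, intro ballI)
          fix x assume "x \<in> W"
          hence "x + int c \<noteq> int s" using nW by (metis add_diff_cancel_right')
          thus "(if x + int c = int s then xi x * b x c else 0) = 0" by simp
        qed
        moreover have "J c s = th1 s * r c" using inv1[OF _ rp s] c by auto
        ultimately show False using ne rp by simp
      qed
    qed
    thus ?thesis by simp
  qed simp
  have KL': "(\<Sum>a\<in>W. \<Sum>c\<in>{0..my}. pL a c * log 2 (T (a + int c))) = K"
    by (rule first_term[OF fW _ peqL KL R1]) auto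
  have MIL: "mutual_info pL W {0..my} = K - HW"
  proof -
    have "mutual_info pL W {0..my} = K - (\<Sum>a\<in>W. (\<Sum>c\<in>{0..my}. pL a c) * log 2 (\<Sum>c\<in>{0..my}. pL a c))"
      by (subst mi_formula[of W "{0..my}" pL T r, OF fW _ peqL pnnL Tnn]) (auto simp: KL' r_def)
    also have "\<dots> = K - HW" unfolding HW_def by (simp add: pAL)
    finally show ?thesis .
  qed
  show ?thesis using MIL MIR unfolding pL_def pR_def W_def by simp
qed

end
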